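(* (1) For every $t\ge0$, $\mathfrak{e}^D_t\in\mathcal{E}(\mathcal{P}^{s+}_{3,5})$, but $\mathfrak{e}^D_t\notin\mathcal{E}(\mathcal{P}^{+}_{3,5})$. (2) If $t>0$, $t\ne1$ and $f\in\mathcal{P}^{s+}_{3,5}$ satisfies $f(t,1,1)=f(1,1,1)=f(0,0,1)=0$, then $f=\lambda\mathfrak{e}^D_t$ for some $\lambda\ge0$. (3) If $f\in\mathcal{P}^{s+}_{3,5}$ satisfies $f(1,1,1)=f_{aa}(1,1,1)=f(0,0,1)=0$, then $f=\lambda\mathfrak{e}^D_1$ for some $\lambda\ge0$; in particular $\mathfrak{e}^D_1=s_1-8s_3\in\mathcal{E}(\mathcal{P}^{s+}_{3,5})$. (4) If $f\in\mathcal{P}^{s+}_{3,5}$ satisfies $f(1,1,1)=f(0,0,1)=f_a(0,0,1)=0$ and $f_{aa}(0,0,1)+f_{ab}(0,0,1)=0$, then $f=\lambda\mathfrak{e}^D_\infty$ for some $\lambda\ge0$; in particular $\mathfrak{e}^D_\infty=s_2-2s_3\in\mathcal{E}(\mathcal{P}^{s+}_{3,5})$.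
   Context: Let $a,b,c$ be variables. For nonnegative integers $m,n$ put $S_{m,n}=a^mb^n+b^mc^n+c^ma^n$, $S_n=S_{n,0}=a^n+b^n+c^n$, $T_{m,n}=S_{m,n}+S_{n,m}$, $U=abc$ (so $S_{1,1}=ab+bc+ca$). Let $\mathcal{H}^s_{3,5}$ be the real vector space of symmetric homogeneous polynomials of degree 5 in $\mathbb{R}[a,b,c]$; it has basis $s_0=S_5-US_{1,1}$, $s_1=T_{4,1}-2US_{1,1}$, $s_2=T_{3,2}-2US_{1,1}$, $s_3=US_2-US_{1,1}$, $s_4=US_{1,1}$. Let $\mathcal{P}^{s+}_{3,5}=\{f\in\mathcal{H}^s_{3,5}: f(a,b,c)\ge 0\text{ for all }a,b,c\ge0\}$, and let $\mathcal{P}^+_{3,5}$ be the cone of all (not necessarily symmetric) real homogeneous quintic forms in $a,b,c$ that are nonnegative on $\mathbb{R}_{\ge0}^3$. For a closed convex cone $\mathcal{P}$, an element $f\in\mathcal{P}\setminus\{0\}$ is extremal if whenever $f=g+h$ with $g,h\in\mathcal{P}$ we have $g,h\in\mathbb{R}_{\ge0}f$; $\mathcal{E}(\mathcal{P})$ is the set of extremal elements. Subscripts denote partial derivatives: $f_a=\partial f/\partial a$, $f_{aa}=\partial^2f/\partial a^2$, $f_{ab}=\partial^2f/\partial a\partial b$, etc. Family D: $\mathfrak{e}^D_t=s_1+(t^2-1)s_2-2(t+1)^2s_3$, and $\mathfrak{e}^D_\infty=s_2-2s_3$. *)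

theory Defs
  imports "HOL-Analysis.Analysis"
begin

type_synonym form3 = "real \<Rightarrow> real \<Rightarrow> real \<Rightarrow> real"

text \<open>Real homogeneous quintic forms in a,b,c, represented as polynomial functions
  (a real polynomial is determined by its function).\<close>
definition quintic_forms :: "form3 set" where
  "quintic_forms = {f. \<exists>C :: nat \<Rightarrow> nat \<Rightarrow> real. \<forall>a b c.
      f a b c = (\<Sum>i\<le>5. \<Sum>j\<le>5 - i. C i j * a ^ i * b ^ j * c ^ (5 - i - j))}"

definition sym_quintic_forms :: "form3 set" where
  "sym_quintic_forms = {f \<in> quintic_forms. \<forall>a b c. f a b c = f b a c \<and> f a b c = f b c a}"

definition nonneg_orthant :: "form3 \<Rightarrow> bool" where
  "nonneg_orthant f \<longleftrightarrow> (\<forall>a b c. a \<ge> 0 \<longrightarrow> b \<ge> 0 \<longrightarrow> c \<ge> 0 \<longrightarrow> f a b c \<ge> 0)"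

definition P_sym_plus :: "form3 set" where
  "P_sym_plus = {f \<in> sym_quintic_forms. nonneg_orthant f}"

definition P_plus :: "form3 set" where
  "P_plus = {f \<in> quintic_forms. nonneg_orthant f}"

definition extremal :: "form3 set \<Rightarrow> form3 \<Rightarrow> bool" where
  "extremal P f \<longleftrightarrow> f \<in> P \<and> f \<noteq> (\<lambda>a b c. 0) \<and>
     (\<forall>g h. g \<in> P \<longrightarrow> h \<in> P \<longrightarrow> f = (\<lambda>a b c. g a b c + h a b c) \<longrightarrow>
        (\<exists>l\<ge>0. g = (\<lambda>a b c. l * f a b c)) \<and> (\<exists>l\<ge>0. h = (\<lambda>a b c. l * f a b c)))"

definition Smn :: "nat \<Rightarrow> nat \<Rightarrow> form3" where
  "Smn m n a b c = a ^ m * b ^ n + b ^ m * c ^ n + c ^ m * a ^ n"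

definition Tmn :: "nat \<Rightarrow> nat \<Rightarrow> form3" where
  "Tmn m n a b c = Smn m n a b c + Smn n m a b c"

definition Uf :: form3 where "Uf a b c = a * b * c"

definition s0 :: form3 where "s0 a b c = Smn 5 0 a b c - Uf a b c * Smn 1 1 a b c"
definition s1 :: form3 where "s1 a b c = Tmn 4 1 a b c - 2 * Uf a b c * Smn 1 1 a b c"
definition s2 :: form3 where "s2 a b c = Tmn 3 2 a b c - 2 * Uf a b c * Smn 1 1 a b c"
definition s3 :: form3 where "s3 a b c = Uf a b c * Smn 2 0 a b c - Uf a b c * Smn 1 1 a b c"
definition s4 :: form3 where "s4 a b c = Uf a b c * Smn 1 1 a b c"

definition eD :: "real \<Rightarrow> form3" where
  "eD t a b c = s1 a b c + (t ^ 2 - 1) * s2 a b c - 2 * (t + 1) ^ 2 * s3 a b c"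

definition eD_inf :: form3 where
  "eD_inf a b c = s2 a b c - 2 * s3 a b c"

definition d_a :: "form3 \<Rightarrow> form3" where
  "d_a f a b c = deriv (\<lambda>x. f x b c) a"
definition d_b :: "form3 \<Rightarrow> form3" where
  "d_b f a b c = deriv (\<lambda>y. f a y c) b"

end

theory Submission imports Defs begin
lemma sum21: "(\<Sum>i\<le>5. \<Sum>j\<le>5 - i. C i j * a ^ i * b ^ j * c ^ (5 - i - j)) =
  C 0 0 * c^5 + C 0 1 * b * c^4 + C 0 2 * b^2*c^3 + C 0 3 * b^3*c^2 + C 0 4 * b^4*c + C 0 5 * b^5
 + C 1 0 * a*c^4 + C 1 1 * a*b*c^3 + C 1 2 * a*b^2*c^2 + C 1 3*a*b^3*c + C 1 4 * a*b^4
 + C 2 0 * a^2*c^3 + C 2 1*a^2*b*c^2 + C 2 2*a^2*b^2*c + C 2 3*a^2*b^3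
 + C 3 0 * a^3*c^2 + C 3 1 * a^3*b*c + C 3 2*a^3*b^2
 + C 4 0 * a^4*c + C 4 1 * a^4*b + C 5 0 * (a::real)^5"
  by (simp add: numeral_eq_Suc atMost_Suc algebra_simps)

definition Qf :: "real \<Rightarrow> real \<Rightarrow> real \<Rightarrow> real \<Rightarrow> real \<Rightarrow> form3" where
  "Qf k0 k1 k2 k3 k4 a b c = k0*(a^5+b^5+c^5) + k1*(a^4*b+a*b^4+b^4*c+b*c^4+c^4*a+c*a^4)
   + k2*(a^3*b^2+a^2*b^3+b^3*c^2+b^2*c^3+c^3*a^2+c^2*a^3) + k3*(a*b*c*(a^2+b^2+c^2))
   + k4*(a*b*c*(a*b+b*c+c*a))"

lemma sym_repr:
  assumes "f \<in> sym_quintic_forms"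
  shows "\<exists>k0 k1 k2 k3 k4. f = Qf k0 k1 k2 k3 k4"
proof -
  obtain C where C: "\<And>a b c. f a b c = (\<Sum>i\<le>5. \<Sum>j\<le>5 - i. C i j * a ^ i * b ^ j * c ^ (5 - i - j))"
    using assms unfolding sym_quintic_forms_def quintic_forms_def by blast
  have s1: "\<And>a b c. f a b c = f b a c" and s2: "\<And>a b c. f a b c = f b c a"
    using assms unfolding sym_quintic_forms_def by auto
  have six: "6 * f a b c = f a b c + f b c a + f c a b + f b a c + f a c b + f c b a" for a b c
  proof -
    have "f b c a = f a b c" "f c a b = f a b c" "f b a c = f a b c" "f a c b = f a b c" "f c b a = f a b c"
      using s1 s2 by metis+
    then show ?thesis by simp
  qed
  show ?thesis
  proof (intro exI ext)
    fix a b c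
    have "6 * f a b c = Qf (2*(C 5 0 + C 0 5 + C 0 0)) ((C 4 1 + C 1 4 + C 4 0 + C 0 4 + C 1 0 + C 0 1))
       ((C 3 2 + C 2 3 + C 3 0 + C 0 3 + C 2 0 + C 0 2)) (2*(C 3 1 + C 1 3 + C 1 1)) (2*(C 2 2 + C 2 1 + C 1 2)) a b c"
      unfolding six unfolding C sum21 Qf_def by algebra
    then show "f a b c = Qf ((C 5 0 + C 0 5 + C 0 0)/3) ((C 4 1 + C 1 4 + C 4 0 + C 0 4 + C 1 0 + C 0 1)/6)
       ((C 3 2 + C 2 3 + C 3 0 + C 0 3 + C 2 0 + C 0 2)/6) ((C 3 1 + C 1 3 + C 1 1)/3) ((C 2 2 + C 2 1 + C 1 2)/3) a b c"
      unfolding Qf_def by (simp add: field_simps)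
  qed
qed

definition Cq :: "real \<Rightarrow> real \<Rightarrow> real \<Rightarrow> real \<Rightarrow> real \<Rightarrow> nat \<Rightarrow> nat \<Rightarrow> real" where
  "Cq k0 k1 k2 k3 k4 i j = (if (i,j) \<in> {(5,0),(0,5),(0,0)} then k0
     else if (i,j) \<in> {(4,1),(1,4),(4,0),(0,4),(1,0),(0,1)} then k1
     else if (i,j) \<in> {(3,2),(2,3),(3,0),(0,3),(2,0),(0,2)} then k2
     else if (i,j) \<in> {(3,1),(1,3),(1,1)} then k3
     else if (i,j) \<in> {(2,2),(2,1),(1,2)} then k4 else 0)"

lemma Qf_quintic: "Qf k0 k1 k2 k3 k4 \<in> quintic_forms"
  unfolding quintic_forms_def
  apply (rule CollectI, rule exI[of _ "Cq k0 k1 k2 k3 k4"])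
  apply (intro allI, subst sum21)
  apply (simp add: Cq_def Qf_def)
  by algebra

lemma Qf_sym: "Qf k0 k1 k2 k3 k4 \<in> sym_quintic_forms"
  unfolding sym_quintic_forms_def using Qf_quintic by (auto simp: Qf_def algebra_simps)

definition pc :: "real \<Rightarrow> form3" where
  "pc t a b c = c*(a-b)^2*(a+b-(t+1)*c)^2"

lemma pc_quintic: "pc t \<in> quintic_forms"
  unfolding quintic_forms_def
  apply (rule CollectI, rule exI[of _ "\<lambda>i j. if (i,j) = (4,0) then 1 else if (i,j) = (2,2) then -2
     else if (i,j) = (0,4) then 1 else if (i,j) = (3,0) then -2*(t+1) else if (i,j) = (2,1) then 2*(t+1)
     else if (i,j) = (1,2) then 2*(t+1) else if (i,j) = (0,3) then -2*(t+1) else if (i,j) = (2,0) then (t+1)^2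
     else if (i,j) = (1,1) then -2*(t+1)^2 else if (i,j) = (0,2) then (t+1)^2 else 0"])
  apply (intro allI, subst sum21)
  apply (simp add: pc_def)
  by algebra

lemma quintic_diff: "f \<in> quintic_forms \<Longrightarrow> g \<in> quintic_forms \<Longrightarrow> (\<lambda>a b c. f a b c - g a b c) \<in> quintic_forms"
proof -
  assume "f \<in> quintic_forms" "g \<in> quintic_forms"
  then obtain C D where C: "\<And>a b c. f a b c = (\<Sum>i\<le>5. \<Sum>j\<le>5 - i. C i j * a ^ i * b ^ j * c ^ (5 - i - j))"
    and D: "\<And>a b c. g a b c = (\<Sum>i\<le>5. \<Sum>j\<le>5 - i. D i j * a ^ i * b ^ j * c ^ (5 - i - j))"
    unfolding quintic_forms_def by blast
  show ?thesis unfolding quintic_forms_def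
    apply (rule CollectI, rule exI[of _ "\<lambda>i j. C i j - D i j"])
    by (simp add: C D sum_subtractf[symmetric] algebra_simps)
qed

lemma eD_Qf: "eD t = Qf 0 1 (t^2-1) (-2*(t+1)^2) (4*t+2)"
  by (rule ext)+ (simp add: eD_def Qf_def s1_def s2_def s3_def Tmn_def Smn_def Uf_def power2_eq_square; algebra)

lemma eDinf_Qf: "eD_inf = Qf 0 0 1 (-2) 0"
  by (rule ext)+ (simp add: eD_inf_def Qf_def s1_def s2_def s3_def Tmn_def Smn_def Uf_def power2_eq_square; algebra)

lemma eD_sos: "eD t a b c = pc t a b c + pc t b c a + pc t c a b"
  unfolding eD_Qf Qf_def pc_def by algebra

lemma pc_nonneg: "a \<ge> 0 \<Longrightarrow> b \<ge> 0 \<Longrightarrow> c \<ge> 0 \<Longrightarrow> pc t a b c \<ge> 0"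
  unfolding pc_def by simp

lemma eD_Psym: "eD t \<in> P_sym_plus"
  unfolding P_sym_plus_def nonneg_orthant_def
proof (intro CollectI conjI allI impI)
  show "eD t \<in> sym_quintic_forms" unfolding eD_Qf by (rule Qf_sym)
  fix a b c :: real assume "0 \<le> a" "0 \<le> b" "0 \<le> c"
  then show "0 \<le> eD t a b c" unfolding eD_sos by (intro add_nonneg_nonneg pc_nonneg)
qed

lemma test1: "((\<lambda>y. Qf k0 k1 k2 k3 k4 x y 1) has_real_derivative (k1*(x^4+1)+k3*(x^3+x)+k4*x^2)) (at 0)"
  unfolding Qf_def
  by (auto intro!: derivative_eq_intros simp: algebra_simps power2_eq_square power3_eq_cube)

lemma test2: "((\<lambda>y. Qf k0 k1 k2 k3 k4 y 0 1) has_real_derivative (5*k0*x^4 + k1*(1+4*x^3) + k2*(2*x+3*x^2))) (at x)"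
  unfolding Qf_def
  by (auto intro!: derivative_eq_intros simp: algebra_simps)

lemma small_arg:
  fixes A B K L \<delta> u0 :: real
  assumes "\<delta> > 0" and H: "\<forall>u. 0 < u \<and> u < \<delta> \<and> u \<noteq> u0 \<longrightarrow> A \<le> B*u + K*u^2 + L*u^3"
  shows "A \<le> 0"
proof (rule ccontr)
  assume "\<not> A \<le> 0" hence A: "A > 0" by simp
  define M where "M = \<bar>B\<bar> + \<bar>K\<bar> + \<bar>L\<bar> + 1"
  have M: "M \<ge> 1" unfolding M_def by simp
  define u1 where "u1 = min (min (\<delta>/2) (1/2)) (A/(2*M))"
  have u1: "u1 > 0" "u1 < \<delta>" "u1 \<le> 1/2" "u1 \<le> A/(2*M)"
    using assms(1) A M unfolding u1_def by auto
  have bound: "B*u + K*u^2 + L*u^3 < A" if "0<u" "u \<le> u1" for u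
  proof -
    have u: "u \<le> 1" using that u1 by simp
    have "u^2 \<le> u" using u that by (simp add: power2_eq_square mult_le_cancel_right1)
    moreover have "u^3 \<le> u^2" using u that by (simp add: power3_eq_cube power2_eq_square mult_le_cancel_right1)
    ultimately have p: "u^2 \<le> u" "u^3 \<le> u" by auto
    have "B*u \<le> \<bar>B\<bar>*u" using that by (simp add: mult_right_mono)
    moreover have "K*u^2 \<le> \<bar>K\<bar>*u"
      by (meson abs_ge_self abs_ge_zero mult_left_mono order.trans p(1) that(1) less_imp_le zero_le_power mult_right_mono)
    moreover have "L*u^3 \<le> \<bar>L\<bar>*u"
      by (meson abs_ge_self abs_ge_zero mult_left_mono order.trans p(2) that(1) less_imp_le zero_le_power mult_right_mono)
    ultimately have "B*u + K*u^2 + L*u^3 \<le> (M-1)*u" unfolding M_def by (simp add: algebra_simps)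
    also have "... \<le> (M-1)*u1" using that M by (intro mult_left_mono) auto
    also have "... < M*u1" using u1(1) by (simp add: algebra_simps)
    also have "... \<le> A/2" using u1(4) M by (simp add: field_simps)
    finally show ?thesis using A by simp
  qed
  have "u1 \<noteq> u0 \<or> u1/2 \<noteq> u0" using u1 by auto
  then obtain u where "0 < u" "u \<le> u1" "u \<noteq> u0" using u1 by (metis half_gt_zero_iff less_eq_real_def linorder_not_le field_sum_of_halves less_add_same_cancel1)
  then show False using H bound[of u] u1 by force
qed


lemma da_001: "d_a (Qf k0 k1 k2 k3 k4) 0 0 1 = k1"
  unfolding d_a_def using DERIV_imp_deriv[OF test2[of k0 k1 k2 k3 k4 0]] by simp

lemma daa_001: "d_a (d_a (Qf k0 k1 k2 k3 k4)) 0 0 1 = 2*k2"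
proof -
  have e: "(\<lambda>x. d_a (Qf k0 k1 k2 k3 k4) x 0 1) = (\<lambda>x. 5*k0*x^4 + k1*(1+4*x^3) + k2*(2*x+3*x^2))"
    unfolding d_a_def using DERIV_imp_deriv[OF test2] by auto
  have "((\<lambda>x. 5*k0*x^4 + k1*(1+4*x^3) + k2*(2*x+3*x^2)) has_real_derivative 2*k2) (at 0)"
    by (auto intro!: derivative_eq_intros)
  then have "deriv (\<lambda>x. d_a (Qf k0 k1 k2 k3 k4) x 0 1) 0 = 2*k2" unfolding e by (rule DERIV_imp_deriv)
  then show ?thesis by (simp add: d_a_def[of "d_a _"])
qed

lemma dab_001: "d_a (d_b (Qf k0 k1 k2 k3 k4)) 0 0 1 = k3"
proof -
  have e: "(\<lambda>x. d_b (Qf k0 k1 k2 k3 k4) x 0 1) = (\<lambda>x. k1*(x^4+1)+k3*(x^3+x)+k4*x^2)"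
    unfolding d_b_def using DERIV_imp_deriv[OF test1] by auto
  have "((\<lambda>x. k1*(x^4+1)+k3*(x^3+x)+k4*x^2) has_real_derivative k3) (at 0)"
    by (auto intro!: derivative_eq_intros)
  then have "deriv (\<lambda>x. d_b (Qf k0 k1 k2 k3 k4) x 0 1) 0 = k3" unfolding e by (rule DERIV_imp_deriv)
  then show ?thesis by (simp add: d_a_def[of "d_b _"])
qed

lemma Qf_line: "Qf 0 k1 k2 k3 (-2*k1-2*k2-k3) z 1 1 = (z-1)^2 * (2*k1*(z+1)^2 + 2*k2*(z+1) + k3*z)"
  unfolding Qf_def power_one mult_1_right mult_1_left by algebra

lemma test3: "((\<lambda>y. Qf 0 k1 k2 k3 (-2*k1-2*k2-k3) y 1 1) has_real_derivative
   (2*(x-1)*(2*k1*(x+1)^2 + 2*k2*(x+1) + k3*x) + (x-1)^2*(4*k1*(x+1)+2*k2+k3))) (at x)"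
  unfolding Qf_line
  apply (rule derivative_eq_intros refl)+
  apply (simp add: algebra_simps)
  done

lemma daa_111: "d_a (d_a (Qf 0 k1 k2 k3 (-2*k1-2*k2-k3))) 1 1 1 = 2*(8*k1+4*k2+k3)"
proof -
  have e: "(\<lambda>x. d_a (Qf 0 k1 k2 k3 (-2*k1-2*k2-k3)) x 1 1) = (\<lambda>x. 2*(x-1)*(2*k1*(x+1)^2 + 2*k2*(x+1) + k3*x) + (x-1)^2*(4*k1*(x+1)+2*k2+k3))"
    unfolding d_a_def using DERIV_imp_deriv[OF test3] by auto
  have "((\<lambda>x. 2*(x-1)*(2*k1*(x+1)^2 + 2*k2*(x+1) + k3*x) + (x-1)^2*(4*k1*(x+1)+2*k2+k3)) has_real_derivative 2*(8*k1+4*k2+k3)) (at 1)"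
    apply (rule derivative_eq_intros refl)+
    apply (simp add: algebra_simps)
    done
  then have "deriv (\<lambda>x. d_a (Qf 0 k1 k2 k3 (-2*k1-2*k2-k3)) x 1 1) 1 = 2*(8*k1+4*k2+k3)" unfolding e by (rule DERIV_imp_deriv)
  then show ?thesis by (simp add: d_a_def[of "d_a _"])
qed


lemma zeros_k: "Qf k0 k1 k2 k3 k4 1 1 1 = 0 \<Longrightarrow> Qf k0 k1 k2 k3 k4 0 0 1 = 0 \<Longrightarrow> k0 = 0 \<and> k4 = -2*k1-2*k2-k3"
  by (simp add: Qf_def)

lemma G_shift: "2*(k1::real)*((t+u)+1)^2 + 2*k2*((t+u)+1) + k3*(t+u) = (2*k1*(t+1)^2 + 2*k2*(t+1) + k3*t) + (4*k1*(t+1)+2*k2+k3)*u + 2*k1*u^2"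
  by (simp add: algebra_simps power2_eq_square)

lemma eD_line: "eD t z 1 1 = (z-1)^2 * (2*(z-t)^2)"
  unfolding eD_Qf Qf_def power_one mult_1_right mult_1_left by algebra

lemma eD_120: "eD t 1 2 0 > 0" if "t \<ge> 0"
proof -
  have "eD t 1 2 0 = 4*(1-t)^2 + 2*(2*t+1)^2" unfolding eD_sos pc_def by (simp add: algebra_simps power2_eq_square)
  moreover have "(2*t+1)^2 > 0" using that by simp
  ultimately show ?thesis by (smt (verit) zero_le_power2)
qed

lemma tail:
  assumes "0 \<le> t" and G: "2*k1*(t+1)^2 + 2*k2*(t+1) + k3*t = 0" and D: "4*k1*(t+1)+2*k2+k3 = 0"
    and nn: "nonneg_orthant (Qf 0 k1 k2 k3 (-2*k1-2*k2-k3))"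
  shows "\<exists>l\<ge>0. Qf 0 k1 k2 k3 (-2*k1-2*k2-k3) = (\<lambda>a b c. l * eD t a b c)"
proof -
  have k3: "k3 = -4*k1*(t+1) - 2*k2" using D by linarith
  have "2*k1*(t+1)^2 + 2*k2*(t+1) + (-4*k1*(t+1) - 2*k2)*t = 0" using G k3 by simp
  hence k2: "k2 = k1*(t^2-1)" by (simp add: algebra_simps power2_eq_square)
  have k3': "k3 = -2*k1*(t+1)^2" using k3 k2 by (simp add: algebra_simps power2_eq_square)
  have eq: "Qf 0 k1 k2 k3 (-2*k1-2*k2-k3) = (\<lambda>a b c. k1 * eD t a b c)"
    unfolding eD_Qf k2 k3' Qf_def by (intro ext) algebra
  have "0 \<le> Qf 0 k1 k2 k3 (-2*k1-2*k2-k3) 1 2 0" using nn unfolding nonneg_orthant_def by simp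
  hence "0 \<le> k1 * eD t 1 2 0" unfolding eq by simp
  hence "k1 \<ge> 0" using eD_120[OF assms(1)] by (simp add: zero_le_mult_iff)
  then show ?thesis using eq by blast
qed

lemma div_u: "0 < (u::real) \<Longrightarrow> u*X \<le> u*Y \<Longrightarrow> X \<le> Y" by simp

lemma comp_eD:
  assumes t: "0 \<le> t" and gP: "g \<in> P_sym_plus" and hP: "h \<in> P_sym_plus"
    and sum: "\<forall>a b c. eD t a b c = g a b c + h a b c"
  shows "\<exists>l\<ge>0. g = (\<lambda>a b c. l * eD t a b c)"
proof -
  obtain k0 k1 k2 k3 k4 where g: "g = Qf k0 k1 k2 k3 k4" using sym_repr gP unfolding P_sym_plus_def by blast
  have gn: "\<And>a b c. a\<ge>0 \<Longrightarrow> b\<ge>0 \<Longrightarrow> c\<ge>0 \<Longrightarrow> g a b c \<ge> 0"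
    using gP unfolding P_sym_plus_def nonneg_orthant_def by blast
  have hn: "\<And>a b c. a\<ge>0 \<Longrightarrow> b\<ge>0 \<Longrightarrow> c\<ge>0 \<Longrightarrow> h a b c \<ge> 0"
    using hP unfolding P_sym_plus_def nonneg_orthant_def by blast
  have le: "g a b c \<le> eD t a b c" if "a\<ge>0" "b\<ge>0" "c\<ge>0" for a b c
    using sum hn[OF that] by simp
  have "eD t 1 1 1 = 0" "eD t 0 0 1 = 0" by (simp_all add: eD_Qf Qf_def algebra_simps power2_eq_square)
  hence "g 1 1 1 = 0" "g 0 0 1 = 0" using le[of 1 1 1] gn[of 1 1 1] le[of 0 0 1] gn[of 0 0 1] by auto
  hence z: "k0 = 0" "k4 = -2*k1-2*k2-k3" using zeros_k g by auto
  have g': "g = Qf 0 k1 k2 k3 (-2*k1-2*k2-k3)" using g z by simp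
  define G where "G z = 2*k1*(z+1)^2 + 2*k2*(z+1) + k3*z" for z
  have Gb: "0 \<le> G z \<and> G z \<le> 2*(z-t)^2" if "z \<ge> 0" "z \<noteq> 1" for z
  proof -
    have pos: "(z-1)^2 > 0" using that by simp
    have "0 \<le> (z-1)^2 * G z" using gn[of z 1 1] that unfolding g' Qf_line G_def by simp
    hence "0 \<le> G z" using pos by (simp add: zero_le_mult_iff)
    moreover have "(z-1)^2 * G z \<le> (z-1)^2 * (2*(z-t)^2)" using le[of z 1 1] that unfolding g' Qf_line G_def eD_line by simp
    hence "G z \<le> 2*(z-t)^2" using pos by simp
    ultimately show ?thesis by simp
  qed
  define Gt where "Gt = G t"
  define D where "D = 4*k1*(t+1)+2*k2+k3"
  have shift: "G (t+u) = Gt + D*u + 2*k1*u^2" for u unfolding G_def Gt_def D_def by (rule G_shift)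
  have bnd: "0 \<le> Gt + D*u + 2*k1*u^2 \<and> Gt + D*u + 2*k1*u^2 \<le> 2*u^2" if "0 < u" "u \<noteq> 1-t" for u
    using Gb[of "t+u"] that t unfolding shift by auto
  have "Gt \<le> 0"
  proof (rule small_arg[of 1 "1-t" Gt "-D" "2-2*k1" 0])
    show "\<forall>u. 0 < u \<and> u < 1 \<and> u \<noteq> 1-t \<longrightarrow> Gt \<le> -D*u + (2-2*k1)*u^2 + 0*u^3"
      using bnd by (auto simp: algebra_simps)
  qed simp
  moreover have "-Gt \<le> 0"
  proof (rule small_arg[of 1 "1-t" "-Gt" "D" "2*k1" 0])
    show "\<forall>u. 0 < u \<and> u < 1 \<and> u \<noteq> 1-t \<longrightarrow> -Gt \<le> D*u + (2*k1)*u^2 + 0*u^3"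
    proof (intro allI impI)
      fix u assume u: "0 < u \<and> u < 1 \<and> u \<noteq> 1-t"
      then show "-Gt \<le> D*u + (2*k1)*u^2 + 0*u^3" using bnd[of u] by simp
    qed
  qed simp
  ultimately have Gt0: "Gt = 0" by simp
  have "D \<le> 0"
  proof (rule small_arg[of 1 "1-t" "D" "2-2*k1" 0 0])
    show "\<forall>u. 0 < u \<and> u < 1 \<and> u \<noteq> 1-t \<longrightarrow> D \<le> (2-2*k1)*u + 0*u^2 + 0*u^3"
    proof (intro allI impI)
      fix u assume u: "0 < u \<and> u < 1 \<and> u \<noteq> 1-t"
      have "u*D \<le> u*((2-2*k1)*u)" using bnd[of u] u Gt0 by (simp add: algebra_simps power2_eq_square)
      then show "D \<le> (2-2*k1)*u + 0*u^2 + 0*u^3" using div_u u by auto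
    qed
  qed simp
  moreover have "-D \<le> 0"
  proof (rule small_arg[of 1 "1-t" "-D" "2*k1" 0 0])
    show "\<forall>u. 0 < u \<and> u < 1 \<and> u \<noteq> 1-t \<longrightarrow> -D \<le> (2*k1)*u + 0*u^2 + 0*u^3"
    proof (intro allI impI)
      fix u assume u: "0 < u \<and> u < 1 \<and> u \<noteq> 1-t"
      have h: "u*(-D) \<le> u*((2*k1)*u)" using bnd[of u] u Gt0 by (simp add: algebra_simps power2_eq_square)
      have "-D \<le> (2*k1)*u" using div_u[OF _ h] u by blast
      then show "-D \<le> (2*k1)*u + 0*u^2 + 0*u^3" by simp
    qed
  qed simp
  ultimately have D0: "D = 0" by simp
  have nn: "nonneg_orthant (Qf 0 k1 k2 k3 (-2*k1-2*k2-k3))"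
    using gn unfolding g' nonneg_orthant_def by blast
  show ?thesis using tail[OF t _ _ nn] Gt0 D0 unfolding Gt_def G_def D_def g' by blast
qed


lemma two_sided:
  assumes t: "t > 0" and G0: "2*k1*(t+1)^2 + 2*k2*(t+1) + k3*t = 0"
    and Gn: "\<And>z. z \<ge> 0 \<Longrightarrow> z \<noteq> 1 \<Longrightarrow> 0 \<le> 2*k1*(z+1)^2 + 2*k2*(z+1) + k3*(z::real)"
  shows "4*k1*(t+1)+2*k2+k3 = 0"
proof -
  define D where "D = 4*k1*(t+1)+2*k2+k3"
  have p: "0 \<le> D*u + 2*k1*u^2" if "0<u" "u \<noteq> 1-t" for u
    using Gn[of "t+u"] that t G_shift[of k1 t u k2 k3] G0 unfolding D_def by auto
  have m: "0 \<le> -D*u + 2*k1*u^2" if "0<u" "u<t" "u \<noteq> t-1" for u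
  proof -
    have "0 \<le> 2*k1*(t-u+1)^2 + 2*k2*(t-u+1) + k3*(t-u)" using Gn[of "t-u"] that by simp
    moreover have "2*k1*(t-u+1)^2 + 2*k2*(t-u+1) + k3*(t-u) = (2*k1*(t+1)^2 + 2*k2*(t+1) + k3*t) - D*u + 2*k1*u^2"
      unfolding D_def by (simp add: algebra_simps power2_eq_square)
    ultimately show ?thesis using G0 by simp
  qed
  have "-D \<le> 0"
  proof (rule small_arg[of 1 "1-t" "-D" "2*k1" 0 0])
    show "\<forall>u. 0 < u \<and> u < 1 \<and> u \<noteq> 1-t \<longrightarrow> -D \<le> (2*k1)*u + 0*u^2 + 0*u^3"
    proof (intro allI impI)
      fix u assume u: "0 < u \<and> u < 1 \<and> u \<noteq> 1-t"
      have h: "u*(-D) \<le> u*((2*k1)*u)" using p[of u] u by (simp add: algebra_simps power2_eq_square)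
      have "-D \<le> (2*k1)*u" using div_u[OF _ h] u by blast
      then show "-D \<le> (2*k1)*u + 0*u^2 + 0*u^3" by simp
    qed
  qed simp
  moreover have "D \<le> 0"
  proof (rule small_arg[of t "t-1" "D" "2*k1" 0 0])
    show "\<forall>u. 0 < u \<and> u < t \<and> u \<noteq> t-1 \<longrightarrow> D \<le> (2*k1)*u + 0*u^2 + 0*u^3"
    proof (intro allI impI)
      fix u assume u: "0 < u \<and> u < t \<and> u \<noteq> t-1"
      have h: "u*D \<le> u*((2*k1)*u)" using m[of u] u by (simp add: algebra_simps power2_eq_square)
      have "D \<le> (2*k1)*u" using div_u[OF _ h] u by blast
      then show "D \<le> (2*k1)*u + 0*u^2 + 0*u^3" by simp
    qed
  qed (use t in simp)
  ultimately show ?thesis unfolding D_def by simp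
qed

lemma rep0:
  assumes "f \<in> P_sym_plus" "f 1 1 1 = 0" "f 0 0 1 = 0"
  obtains k1 k2 k3 where "f = Qf 0 k1 k2 k3 (-2*k1-2*k2-k3)"
proof -
  obtain k0 k1 k2 k3 k4 where g: "f = Qf k0 k1 k2 k3 k4" using sym_repr assms(1) unfolding P_sym_plus_def by blast
  hence "k0 = 0" "k4 = -2*k1-2*k2-k3" using zeros_k assms by auto
  then show ?thesis using that g by blast
qed

lemma part2:
  assumes t: "t>0" "t\<noteq>1" and fP: "f \<in> P_sym_plus" and z: "f t 1 1 = 0" "f 1 1 1 = 0" "f 0 0 1 = 0"
  shows "\<exists>l\<ge>0. f = (\<lambda>a b c. l * eD t a b c)"
proof -
  obtain k1 k2 k3 where f: "f = Qf 0 k1 k2 k3 (-2*k1-2*k2-k3)" using rep0 fP z(2,3) by blast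
  have nn: "nonneg_orthant (Qf 0 k1 k2 k3 (-2*k1-2*k2-k3))" using fP f unfolding P_sym_plus_def by simp
  have "(t-1)^2 * (2*k1*(t+1)^2 + 2*k2*(t+1) + k3*t) = 0" using z(1) unfolding f Qf_line .
  hence G0: "2*k1*(t+1)^2 + 2*k2*(t+1) + k3*t = 0" using t by simp
  have Gn: "0 \<le> 2*k1*(z+1)^2 + 2*k2*(z+1) + k3*z" if "z \<ge> 0" "z \<noteq> 1" for z
  proof -
    have "0 \<le> (z-1)^2 * (2*k1*(z+1)^2 + 2*k2*(z+1) + k3*z)" using nn that unfolding nonneg_orthant_def Qf_line[symmetric] by simp
    moreover have "(z-1)^2 > 0" using that by simp
    ultimately show ?thesis by (simp add: zero_le_mult_iff)
  qed
  have "4*k1*(t+1)+2*k2+k3 = 0" using two_sided[OF t(1) G0 Gn] by blast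
  then show ?thesis using tail[OF _ G0 _ nn] t f by auto
qed

lemma part3:
  assumes fP: "f \<in> P_sym_plus" and z: "f 1 1 1 = 0" "d_a (d_a f) 1 1 1 = 0" "f 0 0 1 = 0"
  shows "\<exists>l\<ge>0. f = (\<lambda>a b c. l * eD 1 a b c)"
proof -
  obtain k1 k2 k3 where f: "f = Qf 0 k1 k2 k3 (-2*k1-2*k2-k3)" using rep0 fP z(1,3) by blast
  have nn: "nonneg_orthant (Qf 0 k1 k2 k3 (-2*k1-2*k2-k3))" using fP f unfolding P_sym_plus_def by simp
  have "2*(8*k1+4*k2+k3) = 0" using z(2) unfolding f daa_111 .
  hence G0: "2*k1*(1+1)^2 + 2*k2*(1+1) + k3*1 = 0" by simp
  have Gn: "0 \<le> 2*k1*(z+1)^2 + 2*k2*(z+1) + k3*z" if "z \<ge> 0" "z \<noteq> 1" for z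
  proof -
    have "0 \<le> (z-1)^2 * (2*k1*(z+1)^2 + 2*k2*(z+1) + k3*z)" using nn that unfolding nonneg_orthant_def Qf_line[symmetric] by simp
    moreover have "(z-1)^2 > 0" using that by simp
    ultimately show ?thesis by (simp add: zero_le_mult_iff)
  qed
  have "4*k1*(1+1)+2*k2+k3 = 0" using two_sided[of 1, OF _ G0 Gn] by simp
  then show ?thesis using tail[of 1, OF _ G0 _ nn] f by auto
qed

lemma part4:
  assumes fP: "f \<in> P_sym_plus" and z: "f 1 1 1 = 0" "f 0 0 1 = 0" "d_a f 0 0 1 = 0"
    "d_a (d_a f) 0 0 1 + d_a (d_b f) 0 0 1 = 0"
  shows "\<exists>l\<ge>0. f = (\<lambda>a b c. l * eD_inf a b c)"
proof -
  obtain k1 k2 k3 where f: "f = Qf 0 k1 k2 k3 (-2*k1-2*k2-k3)" using rep0 fP z(1,2) by blast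
  have k1: "k1 = 0" using z(3) unfolding f da_001 .
  have k3: "k3 = -2*k2" using z(4) unfolding f daa_001 dab_001 by simp
  have eq: "f = (\<lambda>a b c. k2 * eD_inf a b c)" unfolding f k1 k3 eDinf_Qf Qf_def by (intro ext) (simp add: algebra_simps)
  have "0 \<le> f 1 1 0" using fP unfolding P_sym_plus_def nonneg_orthant_def by simp
  hence "0 \<le> k2" unfolding f k1 k3 Qf_def by simp
  then show ?thesis using eq by blast
qed

lemma eDinf_sos: "eD_inf a b c = a^3*(b-c)^2 + b^3*(c-a)^2 + c^3*(a-b)^2"
  unfolding eDinf_Qf Qf_def by algebra

lemma eDinf_Psym: "eD_inf \<in> P_sym_plus"
  unfolding P_sym_plus_def nonneg_orthant_def
proof (intro CollectI conjI allI impI)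
  show "eD_inf \<in> sym_quintic_forms" unfolding eDinf_Qf by (rule Qf_sym)
  fix a b c :: real assume "0 \<le> a" "0 \<le> b" "0 \<le> c"
  then show "0 \<le> eD_inf a b c" unfolding eDinf_sos by (intro add_nonneg_nonneg mult_nonneg_nonneg) auto
qed

lemma comp_inf:
  assumes gP: "g \<in> P_sym_plus" and hP: "h \<in> P_sym_plus"
    and sum: "\<forall>a b c. eD_inf a b c = g a b c + h a b c"
  shows "\<exists>l\<ge>0. g = (\<lambda>a b c. l * eD_inf a b c)"
proof -
  have gn: "\<And>a b c. a\<ge>0 \<Longrightarrow> b\<ge>0 \<Longrightarrow> c\<ge>0 \<Longrightarrow> g a b c \<ge> 0"
    using gP unfolding P_sym_plus_def nonneg_orthant_def by blast
  have hn: "\<And>a b c. a\<ge>0 \<Longrightarrow> b\<ge>0 \<Longrightarrow> c\<ge>0 \<Longrightarrow> h a b c \<ge> 0"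
    using hP unfolding P_sym_plus_def nonneg_orthant_def by blast
  have le: "g a b c \<le> eD_inf a b c" if "a\<ge>0" "b\<ge>0" "c\<ge>0" for a b c
    using sum hn[OF that] by simp
  have "eD_inf 1 1 1 = 0" "eD_inf 0 0 1 = 0" by (simp_all add: eDinf_Qf Qf_def)
  hence "g 1 1 1 = 0" "g 0 0 1 = 0" using le[of 1 1 1] gn[of 1 1 1] le[of 0 0 1] gn[of 0 0 1] by auto
  then obtain k1 k2 k3 where g: "g = Qf 0 k1 k2 k3 (-2*k1-2*k2-k3)" using rep0 gP by blast
  have gx: "g x 0 1 = k1*(x+x^4) + k2*(x^2+x^3)" for x unfolding g Qf_def by (simp add: algebra_simps)
  have ex: "eD_inf x 0 1 = x^2+x^3" for x unfolding eDinf_Qf Qf_def by simp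
  have "-k1 \<le> 0"
  proof (rule small_arg[of 1 "-1" "-k1" k2 k2 k1])
    show "\<forall>u. 0 < u \<and> u < 1 \<and> u \<noteq> -1 \<longrightarrow> -k1 \<le> k2*u + k2*u^2 + k1*u^3"
    proof (intro allI impI)
      fix u :: real assume u: "0 < u \<and> u < 1 \<and> u \<noteq> -1"
      have "0 \<le> g u 0 1" using gn u by simp
      hence h: "u*(-k1) \<le> u*(k2*u + k2*u^2 + k1*u^3)" unfolding gx by (simp add: algebra_simps power2_eq_square power3_eq_cube power4_eq_xxxx)
      show "-k1 \<le> k2*u + k2*u^2 + k1*u^3" using div_u[OF _ h] u by blast
    qed
  qed simp
  moreover have "k1 \<le> 0"
  proof (rule small_arg[of 1 "-1" "k1" "1-k2" "1-k2" "-k1"])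
    show "\<forall>u. 0 < u \<and> u < 1 \<and> u \<noteq> -1 \<longrightarrow> k1 \<le> (1-k2)*u + (1-k2)*u^2 + (-k1)*u^3"
    proof (intro allI impI)
      fix u :: real assume u: "0 < u \<and> u < 1 \<and> u \<noteq> -1"
      have "g u 0 1 \<le> eD_inf u 0 1" using le u by simp
      hence h: "u*k1 \<le> u*((1-k2)*u + (1-k2)*u^2 + (-k1)*u^3)" unfolding gx ex by (simp add: algebra_simps power2_eq_square power3_eq_cube power4_eq_xxxx)
      show "k1 \<le> (1-k2)*u + (1-k2)*u^2 + (-k1)*u^3" using div_u[OF _ h] u by blast
    qed
  qed simp
  ultimately have k1: "k1 = 0" by simp
  define A where "A = 2*k2+k3"
  have gu: "g u u 1 = u^2*(A + (-2*k2-2*k3)*u + (k3-2*k2)*u^2 + 2*k2*u^3)" for u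
    unfolding g k1 Qf_def A_def power_one mult_1_right mult_1_left by algebra
  have eu: "eD_inf u u 1 = u^2*(2*u - 4*u^2 + 2*u^3)" for u
    unfolding eDinf_Qf Qf_def power_one mult_1_right mult_1_left by algebra
  have "-A \<le> 0"
  proof (rule small_arg[of 1 "-1" "-A" "-2*k2-2*k3" "k3-2*k2" "2*k2"])
    show "\<forall>u. 0 < u \<and> u < 1 \<and> u \<noteq> -1 \<longrightarrow> -A \<le> (-2*k2-2*k3)*u + (k3-2*k2)*u^2 + (2*k2)*u^3"
    proof (intro allI impI)
      fix u :: real assume u: "0 < u \<and> u < 1 \<and> u \<noteq> -1"
      have "0 \<le> g u u 1" using gn u by simp
      hence h: "u^2*(-A) \<le> u^2*((-2*k2-2*k3)*u + (k3-2*k2)*u^2 + (2*k2)*u^3)" unfolding gu by (simp add: algebra_simps)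
      show "-A \<le> (-2*k2-2*k3)*u + (k3-2*k2)*u^2 + (2*k2)*u^3" using div_u[OF _ h] u by simp
    qed
  qed simp
  moreover have "A \<le> 0"
  proof (rule small_arg[of 1 "-1" "A" "2+2*k2+2*k3" "-4-k3+2*k2" "2-2*k2"])
    show "\<forall>u. 0 < u \<and> u < 1 \<and> u \<noteq> -1 \<longrightarrow> A \<le> (2+2*k2+2*k3)*u + (-4-k3+2*k2)*u^2 + (2-2*k2)*u^3"
    proof (intro allI impI)
      fix u :: real assume u: "0 < u \<and> u < 1 \<and> u \<noteq> -1"
      have "g u u 1 \<le> eD_inf u u 1" using le u by simp
      hence h: "u^2*A \<le> u^2*((2+2*k2+2*k3)*u + (-4-k3+2*k2)*u^2 + (2-2*k2)*u^3)" unfolding gu eu by (simp add: algebra_simps)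
      show "A \<le> (2+2*k2+2*k3)*u + (-4-k3+2*k2)*u^2 + (2-2*k2)*u^3" using div_u[OF _ h] u by simp
    qed
  qed simp
  ultimately have k3: "k3 = -2*k2" unfolding A_def by simp
  have eq: "g = (\<lambda>a b c. k2 * eD_inf a b c)" unfolding g k1 k3 eDinf_Qf Qf_def by (intro ext) (simp add: algebra_simps)
  have "0 \<le> g 1 1 0" using gn by simp
  hence "0 \<le> k2" unfolding g k1 k3 Qf_def by simp
  then show ?thesis using eq by blast
qed


lemma eD_ne0: "t \<ge> 0 \<Longrightarrow> eD t \<noteq> (\<lambda>a b c. 0)"
  using eD_120[of t] by (metis less_irrefl)

lemma not_ext: assumes t: "t \<ge> 0" shows "\<not> extremal P_plus (eD t)"
proof
  assume ext: "extremal P_plus (eD t)"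
  define h where "h = (\<lambda>a b c. eD t a b c - pc t a b c)"
  have eQ: "eD t \<in> quintic_forms" unfolding eD_Qf by (rule Qf_quintic)
  have gP: "pc t \<in> P_plus" unfolding P_plus_def nonneg_orthant_def using pc_quintic pc_nonneg by blast
  have hQ: "h \<in> quintic_forms" unfolding h_def by (rule quintic_diff[OF eQ pc_quintic])
  have hP: "h \<in> P_plus" unfolding P_plus_def nonneg_orthant_def
    using hQ by (auto simp: h_def eD_sos intro!: add_nonneg_nonneg pc_nonneg)
  have sum: "eD t = (\<lambda>a b c. pc t a b c + h a b c)" unfolding h_def by simp
  obtain l where l: "l \<ge> 0" "pc t = (\<lambda>a b c. l * eD t a b c)"
    using ext gP hP sum unfolding extremal_def by blast
  have "pc t 1 2 0 = 0" unfolding pc_def by simp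
  hence "l * eD t 1 2 0 = 0" using l(2) by metis
  hence "l = 0" using eD_120[OF t] by simp
  moreover have "pc t (t+2) 0 1 = (t+2)^2" unfolding pc_def by simp
  ultimately have "(t+2)^2 = 0" using l(2) by (metis mult_zero_left)
  then show False using t by simp
qed

lemma ext_eD: assumes t: "t \<ge> 0" shows "extremal P_sym_plus (eD t)"
  unfolding extremal_def
proof (intro conjI allI impI)
  show "eD t \<in> P_sym_plus" by (rule eD_Psym)
  show "eD t \<noteq> (\<lambda>a b c. 0)" using eD_ne0[OF t] .
  fix g h assume gP: "g \<in> P_sym_plus" and hP: "h \<in> P_sym_plus" and sum: "eD t = (\<lambda>a b c. g a b c + h a b c)"
  have s1: "\<forall>a b c. eD t a b c = g a b c + h a b c" by (simp add: sum)
  have s2: "\<forall>a b c. eD t a b c = h a b c + g a b c" by (simp add: sum add.commute)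
  show "\<exists>l\<ge>0. g = (\<lambda>a b c. l * eD t a b c)" using comp_eD[OF t gP hP s1] .
  show "\<exists>l\<ge>0. h = (\<lambda>a b c. l * eD t a b c)" using comp_eD[OF t hP gP s2] .
qed

lemma ext_inf: "extremal P_sym_plus eD_inf"
  unfolding extremal_def
proof (intro conjI allI impI)
  show "eD_inf \<in> P_sym_plus" by (rule eDinf_Psym)
  have "eD_inf 1 1 0 = 2" unfolding eDinf_Qf Qf_def by simp
  then show "eD_inf \<noteq> (\<lambda>a b c. 0)" by (metis zero_neq_numeral)
  fix g h assume gP: "g \<in> P_sym_plus" and hP: "h \<in> P_sym_plus" and sum: "eD_inf = (\<lambda>a b c. g a b c + h a b c)"
  have s1: "\<forall>a b c. eD_inf a b c = g a b c + h a b c" by (simp add: sum)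
  have s2: "\<forall>a b c. eD_inf a b c = h a b c + g a b c" by (simp add: sum add.commute)
  show "\<exists>l\<ge>0. g = (\<lambda>a b c. l * eD_inf a b c)" using comp_inf[OF gP hP s1] .
  show "\<exists>l\<ge>0. h = (\<lambda>a b c. l * eD_inf a b c)" using comp_inf[OF hP gP s2] .
qed

theorem theorem4p4:
  shows
  "(\<forall>t::real. t \<ge> 0 \<longrightarrow> extremal P_sym_plus (eD t) \<and> \<not> extremal P_plus (eD t)) \<and>
   (\<forall>t::real. \<forall>f. t > 0 \<longrightarrow> t \<noteq> 1 \<longrightarrow> f \<in> P_sym_plus \<longrightarrow>
       f t 1 1 = 0 \<longrightarrow> f 1 1 1 = 0 \<longrightarrow> f 0 0 1 = 0 \<longrightarrow>
       (\<exists>l\<ge>0. f = (\<lambda>a b c. l * eD t a b c))) \<and>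
   (\<forall>f. f \<in> P_sym_plus \<longrightarrow> f 1 1 1 = 0 \<longrightarrow> d_a (d_a f) 1 1 1 = 0 \<longrightarrow> f 0 0 1 = 0 \<longrightarrow>
       (\<exists>l\<ge>0. f = (\<lambda>a b c. l * eD 1 a b c))) \<and>
   (\<forall>a b c. eD 1 a b c = s1 a b c - 8 * s3 a b c) \<and> extremal P_sym_plus (eD 1) \<and>
   (\<forall>f. f \<in> P_sym_plus \<longrightarrow> f 1 1 1 = 0 \<longrightarrow> f 0 0 1 = 0 \<longrightarrow> d_a f 0 0 1 = 0 \<longrightarrow>
       d_a (d_a f) 0 0 1 + d_a (d_b f) 0 0 1 = 0 \<longrightarrow>
       (\<exists>l\<ge>0. f = (\<lambda>a b c. l * eD_inf a b c))) \<and>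
   extremal P_sym_plus eD_inf"
  using ext_eD not_ext part2 part3 part4 ext_inf by (auto simp: eD_def)

end
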